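(* Let $\mathcal A\subset\mathbb R^d$ be finite and nonempty, $\mathcal D=\mathrm{conv}(\mathcal A)$, and let $f$ be convex and differentiable on an open set containing $\mathcal D$. Let $x^*\in\arg\min_{\mathcal D}f$ and let $x\in\mathcal D$ with $f(x)>f(x^* )$. Let $S\in\mathcal S_x(\mathcal A)$ be an active set for $x$, $r:=-\nabla f(x)$ and $\hat e:=(x^*-x)/\|x^*-x\|$ (so that $\langle r,\hat e\rangle>0$). Let $s\in\arg\max_{a\in\mathcal A}\langle r,a\rangle$, $v\in\arg\min_{a\in S}\langle r,a\rangle$ and $d:=s-v$ (the pairwise Frank-Wolfe direction). Then $$\frac{\langle r,d\rangle}{\langle r,\hat e\rangle}\ \ge\ \mathrm{PWidth}(\mathcal A).$$
   Context: Euclidean norm and inner product. For a finite set $\mathcal B\subseteq\mathbb R^d$ and $x\in\mathrm{conv}(\mathcal B)$, $\mathcal S_x(\mathcal B)$ is the family of subsets $S\subseteq\mathcal B$ such that $x$ is a proper convex combination of all elements of $S$ ($x=\sum_{v\in S}\alpha_vv$, all $\alpha_v>0$, $\sum\alpha_v=1$). For $r\ne0$, the pyramidal directional width is $\mathrm{PdirW}(\mathcal B,r,x):=\min_{S\in\mathcal S_x(\mathcal B)}\max_{s\in\mathcal B,\,v\in S}\langle r/\|r\|,s-v\rangle$. The pyramidal width of $\mathcal A$ is $\mathrm{PWidth}(\mathcal A):=\inf\{\mathrm{PdirW}(\mathcal K\cap\mathcal A,r,x)\}$, the infimum over all nonempty faces $\mathcal K$ of the polytope $\mathrm{conv}(\mathcal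 A)$ (including $\mathrm{conv}(\mathcal A)$ itself), all $x\in\mathcal K$, and all $r\in\mathrm{cone}(\mathcal K-x)\setminus\{0\}$, where $\mathrm{cone}(\mathcal K-x)=\{\sum_i\lambda_i(y_i-x):\lambda_i\ge0,\ y_i\in\mathcal K\}$. *)

theory Defs
  imports "HOL-Analysis.Analysis"
begin

definition active_sets :: "'a::euclidean_space set \<Rightarrow> 'a \<Rightarrow> 'a set set" where
  "active_sets B x = {S. S \<subseteq> B \<and> finite S \<and>
      (\<exists>\<alpha>::'a \<Rightarrow> real. (\<forall>v\<in>S. \<alpha> v > 0) \<and> sum \<alpha> S = 1 \<and> (\<Sum>v\<in>S. \<alpha> v *\<^sub>R v) = x)}"

definition PdirW :: "'a::euclidean_space set \<Rightarrow> 'a \<Rightarrow> 'a \<Rightarrow> real" where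
  "PdirW B r x = (INF S\<in>active_sets B x.
      (SUP p\<in>B \<times> S. (r /\<^sub>R norm r) \<bullet> (fst p - snd p)))"

definition cone_of :: "'a::euclidean_space set \<Rightarrow> 'a \<Rightarrow> 'a set" where
  "cone_of K x = {z. \<exists>F c. finite F \<and> F \<subseteq> K \<and> (\<forall>y\<in>F. c y \<ge> (0::real)) \<and>
      z = (\<Sum>y\<in>F. c y *\<^sub>R (y - x))}"

definition PWidth :: "'a::euclidean_space set \<Rightarrow> real" where
  "PWidth A = Inf {PdirW (K \<inter> A) r x | K x r.
      K face_of convex hull A \<and> K \<noteq> {} \<and> x \<in> K \<and> r \<in> cone_of K x \<and> r \<noteq> 0}"

end

theory Submission imports Defs begin
lemma grad_ineq:
  fixes f :: "'a::euclidean_space \<Rightarrow> real"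
  assumes U: "open U" "convex_on U f" and x: "x \<in> U" and y: "y \<in> U"
    and D: "(f has_derivative (\<lambda>h. g \<bullet> h)) (at x)"
  shows "g \<bullet> (y - x) \<le> f y - f x"
proof -
  define d where "d = y - x"
  define A1 where "A1 = {t::real. x + t *\<^sub>R d \<in> U}"
  have cU: "convex U" using U(2) by (simp add: convex_on_def)
  have "A1 = (\<lambda>t. x + t *\<^sub>R d) -` U" by (auto simp: A1_def)
  hence "open A1" 
    using U(1) open_vimage[of _ "\<lambda>t. x + t *\<^sub>R d"] by (auto intro!: continuous_intros)
  have cA1: "convex A1" unfolding A1_def convex_def
  proof (clarify)
    fix s t u v :: real assume h: "x + s *\<^sub>R d \<in> U" "x + t *\<^sub>R d \<in> U" "0 \<le> u" "0 \<le> v" "u + v = 1"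
    have "x + (u * s + v * t) *\<^sub>R d = u *\<^sub>R (x + s *\<^sub>R d) + v *\<^sub>R (x + t *\<^sub>R d)"
      using h(5) by (simp add: algebra_simps scaleR_add_left[symmetric] del: scaleR_add_left)
    thus "x + (u *\<^sub>R s + v *\<^sub>R t) *\<^sub>R d \<in> U" using cU h unfolding convex_def by simp
  qed
  have cg: "convex_on A1 (\<lambda>t. f (x + t *\<^sub>R d))"
    unfolding convex_on_def
  proof (intro conjI cA1 ballI allI impI)
    fix s t u v :: real assume h: "s \<in> A1" "t \<in> A1" "0 \<le> u" "0 \<le> v" "u + v = 1"
    have e: "x + (u *\<^sub>R s + v *\<^sub>R t) *\<^sub>R d = u *\<^sub>R (x + s *\<^sub>R d) + v *\<^sub>R (x + t *\<^sub>R d)"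
      using h(5) by (simp add: algebra_simps scaleR_add_left[symmetric] del: scaleR_add_left)
    show "f (x + (u *\<^sub>R s + v *\<^sub>R t) *\<^sub>R d) \<le> u * f (x + s *\<^sub>R d) + v * f (x + t *\<^sub>R d)"
      unfolding e using U(2) h unfolding convex_on_def A1_def by auto
  qed
  have "0 \<in> A1" "1 \<in> A1" using x y by (auto simp: A1_def d_def)
  have "((\<lambda>t. f (x + t *\<^sub>R d)) has_derivative (\<lambda>t. g \<bullet> (t *\<^sub>R d))) (at 0)"
  proof -
    have h1: "((\<lambda>t::real. x + t *\<^sub>R d) has_derivative (\<lambda>t. t *\<^sub>R d)) (at 0)"
      by (auto intro!: derivative_eq_intros)
    have h2: "(f has_derivative (\<lambda>h. g \<bullet> h)) (at ((\<lambda>t::real. x + t *\<^sub>R d) 0))" using D by simp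
    show ?thesis using diff_chain_at[OF h1 h2] by (simp add: o_def)
  qed
  hence "((\<lambda>t. f (x + t *\<^sub>R d)) has_field_derivative (g \<bullet> d)) (at 0 within A1)"
  proof -
    assume a: "((\<lambda>t. f (x + t *\<^sub>R d)) has_derivative (\<lambda>t. g \<bullet> (t *\<^sub>R d))) (at 0)"
    have "(\<lambda>t. g \<bullet> (t *\<^sub>R d)) = (*) (g \<bullet> d)" by (auto simp: mult.commute)
    with a show ?thesis unfolding has_field_derivative_def by (metis has_derivative_at_withinI)
  qed
  from convex_on_imp_above_tangent[OF cg convex_connected[OF cA1] _ \<open>1 \<in> A1\<close> this]
  have "f (x + 1 *\<^sub>R d) - f (x + 0 *\<^sub>R d) \<ge> g \<bullet> d * (1 - 0)"
    using \<open>open A1\<close> \<open>0 \<in> A1\<close> interior_open by blast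
  thus ?thesis by (simp add: d_def)
qed

lemma cone_char:
  fixes A :: "'a::euclidean_space set"
  shows "convex_cone hull ((\<lambda>a. a - x) ` A) = insert 0 {c *\<^sub>R (z - x) | c z. 0 \<le> c \<and> z \<in> convex hull A}"
proof -
  have e: "(\<lambda>a. a - x) = (\<lambda>a. -x + a)" by auto
  have "convex hull ((\<lambda>a. a - x) ` A) = (\<lambda>a. a - x) ` (convex hull A)"
    unfolding e by (rule convex_hull_translation)
  thus ?thesis unfolding convex_cone_hull_separate conic_hull_explicit by auto
qed

theorem theorem3:
  fixes A :: "'a::euclidean_space set" and f :: "'a \<Rightarrow> real" and grad :: "'a \<Rightarrow> 'a"
    and U :: "'a set" and xstar x s v :: 'a and S :: "'a set"
  assumes "finite A" and "A \<noteq> {}"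
    and "open U" and "convex hull A \<subseteq> U"
    and "convex_on U f"
    and "\<And>y. y \<in> U \<Longrightarrow> (f has_derivative (\<lambda>h. grad y \<bullet> h)) (at y)"
    and "xstar \<in> convex hull A" and "\<And>y. y \<in> convex hull A \<Longrightarrow> f xstar \<le> f y"
    and "x \<in> convex hull A" and "f x > f xstar"
    and "S \<in> active_sets A x"
    and "s \<in> A" and "\<And>a. a \<in> A \<Longrightarrow> (- grad x) \<bullet> a \<le> (- grad x) \<bullet> s"
    and "v \<in> S" and "\<And>a. a \<in> S \<Longrightarrow> (- grad x) \<bullet> v \<le> (- grad x) \<bullet> a"
  shows "((- grad x) \<bullet> (s - v)) / ((- grad x) \<bullet> ((xstar - x) /\<^sub>R norm (xstar - x)))
           \<ge> PWidth A"
proof -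
  define r where "r = - grad x"
  define T where "T = convex_cone hull ((\<lambda>a. a - x) ` A)"
  have Tc: "T = insert 0 {c *\<^sub>R (z - x) | c z. 0 \<le> c \<and> z \<in> convex hull A}"
    unfolding T_def by (rule cone_char)
  have Tin: "y - x \<in> T" if "y \<in> convex hull A" for y
    using that unfolding Tc by (auto intro!: exI[of _ 1])
  have clT: "closed T" unfolding T_def using assms(1) by (simp add: closed_convex_cone_hull)
  have cvT: "convex T" unfolding T_def by (rule convex_convex_cone_hull)
  have T0: "0 \<in> T" unfolding Tc by simp
  define p where "p = closest_point T r"
  define n where "n = r - p"
  have pT: "p \<in> T" unfolding p_def using closest_point_in_set[OF clT] T0 by blast
  have dot: "n \<bullet> (t - p) \<le> 0" if "t \<in> T" for t
    unfolding n_def p_def using closest_point_dot[OF cvT clT that] by simp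
  have "n \<bullet> p = 0"
  proof -
    have "(2::real) *\<^sub>R p \<in> T" using pT unfolding T_def by (rule convex_cone_hull_mul) simp
    from dot[OF this] dot[OF T0] show ?thesis by (simp add: algebra_simps)
  qed
  hence nT: "n \<bullet> t \<le> 0" if "t \<in> T" for t using dot[OF that] by (simp add: inner_diff_right)
  have nD: "n \<bullet> y \<le> n \<bullet> x" if "y \<in> convex hull A" for y
    using nT[OF Tin[OF that]] by (simp add: inner_diff_right)
  have xU: "x \<in> U" and xsU: "xstar \<in> U" using assms(4,7,9) by auto
  have "grad x \<bullet> (xstar - x) \<le> f xstar - f x"
    by (rule grad_ineq[OF assms(3,5) xU xsU assms(6)[OF xU]])
  hence rpos: "r \<bullet> (xstar - x) > 0" using assms(10) unfolding r_def by simp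
  have "r \<bullet> (xstar - x) = p \<bullet> (xstar - x) + n \<bullet> (xstar - x)" unfolding n_def by (simp add: inner_diff_left)
  also have "\<dots> \<le> p \<bullet> (xstar - x)" using nT[OF Tin[OF assms(7)]] by simp
  also have "\<dots> \<le> norm p * norm (xstar - x)" by (rule norm_cauchy_schwarz)
  finally have rle: "r \<bullet> (xstar - x) \<le> norm p * norm (xstar - x)" .
  have xne: "xstar \<noteq> x" using assms(10) by auto
  hence nxs: "norm (xstar - x) > 0" by simp
  have "p \<noteq> 0" using rle rpos by auto
  hence np: "norm p > 0" by simp
  define w where "w = r \<bullet> ((xstar - x) /\<^sub>R norm (xstar - x))"
  have w_eq: "w = r \<bullet> (xstar - x) / norm (xstar - x)" unfolding w_def by (simp add: divide_inverse mult.commute)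
  have wpos: "w > 0" unfolding w_eq using rpos nxs by simp
  have wle: "w \<le> norm p" unfolding w_eq using rle nxs by (simp add: divide_le_eq)
  obtain c z where cz: "p = c *\<^sub>R (z - x)" "0 \<le> c" "z \<in> convex hull A"
    using pT \<open>p \<noteq> 0\<close> unfolding Tc by auto
  have "c \<noteq> 0" using cz \<open>p \<noteq> 0\<close> by auto
  have nz: "n \<bullet> z = n \<bullet> x" using \<open>n \<bullet> p = 0\<close> \<open>c \<noteq> 0\<close> unfolding cz(1) by (simp add: inner_diff_right)
  define K where "K = convex hull A \<inter> {y. n \<bullet> y = n \<bullet> x}"
  have Kface: "K face_of convex hull A" unfolding K_def
    by (rule face_of_Int_supporting_hyperplane_le) (auto intro: nD)
  have xK: "x \<in> K" using assms(9) unfolding K_def by simp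
  have zK: "z \<in> K" using cz(3) nz unfolding K_def by simp
  have pcone: "p \<in> cone_of K x" unfolding cone_of_def
    by (rule CollectI, rule exI[of _ "{z}"], rule exI[of _ "\<lambda>_. c"]) (use zK cz in auto)
  obtain \<alpha> where S: "S \<subseteq> A" "finite S" "\<forall>v\<in>S. \<alpha> v > 0" "sum \<alpha> S = 1" "(\<Sum>v\<in>S. \<alpha> v *\<^sub>R v) = x"
    using assms(11) unfolding active_sets_def by blast
  have SK: "S \<subseteq> K"
  proof
    fix b assume b: "b \<in> S"
    have nonneg: "\<And>u. u\<in>S \<Longrightarrow> 0 \<le> \<alpha> u * (n \<bullet> x - n \<bullet> u)"
      using S(1,3) nD hull_subset[of A convex] by (smt (verit, best) mult_nonneg_nonneg subsetD)
    have "(\<Sum>u\<in>S. \<alpha> u * (n \<bullet> x - n \<bullet> u)) = (\<Sum>u\<in>S. \<alpha> u) * (n \<bullet> x) - n \<bullet> (\<Sum>u\<in>S. \<alpha> u *\<^sub>R u)"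
      by (simp add: algebra_simps sum_subtractf sum_distrib_right inner_sum_right)
    also have "\<dots> = 0" using S(4,5) by simp
    finally have "\<forall>u\<in>S. \<alpha> u * (n \<bullet> x - n \<bullet> u) = 0"
      using sum_nonneg_eq_0_iff[of S "\<lambda>u. \<alpha> u * (n \<bullet> x - n \<bullet> u)"] S(2) nonneg by simp
    hence "\<alpha> b * (n \<bullet> x - n \<bullet> b) = 0" using b by blast
    hence "n \<bullet> b = n \<bullet> x" using S(3) b by auto
    thus "b \<in> K" using b S(1) hull_subset[of A convex] unfolding K_def by auto
  qed
  have Sact: "S \<in> active_sets (K \<inter> A) x" unfolding active_sets_def using S SK by blast
  have rsv: "r \<bullet> (s - v) \<ge> 0" using assms(13)[of v] S(1) assms(14) unfolding r_def by (auto simp: inner_diff_right)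
  have bound: "(p /\<^sub>R norm p) \<bullet> (fst q - snd q) \<le> r \<bullet> (s - v) / norm p" if q: "q \<in> (K \<inter> A) \<times> S" for q
  proof -
    obtain a b where ab: "q = (a, b)" "a \<in> K" "a \<in> A" "b \<in> S" using q by auto
    have na: "n \<bullet> a = n \<bullet> x" using ab(2) unfolding K_def by simp
    have nb: "n \<bullet> b = n \<bullet> x" using SK ab(4) unfolding K_def by auto
    have "p \<bullet> (a - b) = r \<bullet> (a - b)" unfolding n_def[symmetric]
      using na nb unfolding n_def by (simp add: inner_diff_right inner_diff_left)
    also have "\<dots> \<le> r \<bullet> (s - v)" using assms(13)[OF ab(3)] assms(15)[OF ab(4)] unfolding r_def
      by (simp add: inner_diff_right)
    finally have "p \<bullet> (a - b) \<le> r \<bullet> (s - v)" .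
    thus ?thesis using ab(1) np by (simp add: divide_right_mono divide_inverse_commute[symmetric] mult.commute)
  qed
  have finact: "finite (active_sets B y)" if "finite B" for B and y :: 'a
    by (rule finite_subset[of _ "Pow B"]) (use that in \<open>auto simp: active_sets_def\<close>)
  have fKA: "finite (K \<inter> A)" using assms(1) by simp
  have "PdirW (K \<inter> A) p x \<le> (SUP q\<in>(K \<inter> A) \<times> S. (p /\<^sub>R norm p) \<bullet> (fst q - snd q))"
    unfolding PdirW_def
    by (rule cINF_lower[OF _ Sact]) (intro bdd_below_finite finite_imageI finact fKA)
  also have "\<dots> \<le> r \<bullet> (s - v) / norm p"
    by (rule cSUP_least) (use assms(14) SK S(1) bound in auto)
  also have "\<dots> \<le> r \<bullet> (s - v) / w"
    by (rule divide_left_mono) (use rsv wpos wle np in auto)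
  finally have main: "PdirW (K \<inter> A) p x \<le> r \<bullet> (s - v) / w" .
  define L :: real where "L = min (Inf {}) 0"
  have lowb: "L \<le> PdirW (K' \<inter> A) r' x'" for K' r' x'
  proof (cases "active_sets (K' \<inter> A) x' = {}")
    case True thus ?thesis unfolding PdirW_def L_def by simp
  next
    case False
    have "0 \<le> PdirW (K' \<inter> A) r' x'" unfolding PdirW_def
    proof (rule cINF_greatest[OF False])
      fix S' assume S': "S' \<in> active_sets (K' \<inter> A) x'"
      then obtain \<beta> :: "'a \<Rightarrow> real" where b: "S' \<subseteq> K' \<inter> A" "finite S'" "sum \<beta> S' = 1" unfolding active_sets_def by blast
      then obtain b where "b \<in> S'" by (metis all_not_in_conv sum.empty zero_neq_one)
      hence bb: "(b, b) \<in> (K' \<inter> A) \<times> S'" using b(1) by auto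
      have fin: "finite ((K' \<inter> A) \<times> S')" using assms(1) b(2) by simp
      show "0 \<le> (SUP q\<in>(K' \<inter> A) \<times> S'. (r' /\<^sub>R norm r') \<bullet> (fst q - snd q))"
        by (rule cSUP_upper2[OF _ bb]) (use fin in auto)
    qed
    thus ?thesis unfolding L_def by simp
  qed
  have "PWidth A \<le> PdirW (K \<inter> A) p x" unfolding PWidth_def
  proof (rule cInf_lower)
    show "PdirW (K \<inter> A) p x \<in> {PdirW (K \<inter> A) r x |K x r. K face_of convex hull A \<and> K \<noteq> {} \<and> x \<in> K \<and> r \<in> cone_of K x \<and> r \<noteq> 0}"
      using Kface xK pcone \<open>p \<noteq> 0\<close> by blast
    show "bdd_below {PdirW (K \<inter> A) r x |K x r. K face_of convex hull A \<and> K \<noteq> {} \<and> x \<in> K \<and> r \<in> cone_of K x \<and> r \<noteq> 0}"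
      by (rule bdd_belowI[of _ L]) (use lowb in auto)
  qed
  with main show ?thesis unfolding r_def w_def by simp
qed
end
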